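(* Let $T$ be a set of formulas and $\varphi$ a formula in the language of Rational Pavelka logic RPL. Then $T\vdash_{\mathrm{RPL}}\varphi$ if and only if $T^\star\cup T_Q\vdash_{\text{Ł}}\varphi^\star$. In particular (taking $T=\emptyset$), $\varphi$ is a theorem of RPL iff $T_Q\vdash_{\text{Ł}}\varphi^\star$.
   Context: Łukasiewicz logic Ł: propositional logic in connectives $\cdot,\to,\land,\lor,\neg,\oplus,\equiv,\overline0,\overline1$ with modus ponens, with variables from a countably infinite set $X$ together with further variables as needed; it is finitely strongly complete w.r.t. the standard MV-algebra $[0,1]_{\text{Ł}}$ ($x\cdot y=\max(0,x+y-1)$, $x\to y=\min(1,1-x+y)$, $\neg x=1-x$, $x\oplus y=\min(1,x+y)$, $\land=\min$, $\lor=\max$, $x\equiv y=1-|x-y|$). Rational Pavelka logic RPL extends the language of Ł (over variables $X$) with a constant $\overline r$ for each rational $r\in[0,1]$, and extends the axioms of Ł with all bookkeeping axioms: $\neg\overline r\equiv\overline{1-r}$ and $(\overline r*\overline s)\equiv\overline{r*s}$ for binary connectives $*$, where $r*s$ is computed in $[0,1]_{\text{Ł}}$. Let $Q=\{q_{m/n}\mid m,n\in\mathbb N, m\le n, n>0\}$ be fresh variables (disjoint from $X$). $T_Q$ is the Ł-theory with axioms $q_{0/n}\equiv\overline0$ ($n>0$); $q_{1/1}\equiv\overline1$; $q_{1/n}\equiv(\neg q_{1/n})^{n-1}$ ($n\ge2$); $q_{m/n}\equiv m\,q_{1/n}$ ($m\le n$, $n\ge2$), where $x^k$ is the $k$-fold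 product and $kx$ the $k$-fold $\oplus$-sum. The translation $\star$ maps RPL-formulas to Ł-formulas: $x^\star=x$ for $x\in X$, $\overline0^\star=\overline0$, $\overline1^\star=\overline1$, $\overline{r}^\star=q_{m/n}$ for each rational $r\in(0,1)$ where $r=m/n$ in lowest terms, and $\star$ commutes with all connectives; $T^\star=\{\psi^\star\mid\psi\in T\}$. *)

theory Defs
  imports Complex_Main
begin

text \<open>Propositional variables: the countably infinite set X of the paper is
  represented by VX n (n a natural number); the fresh variables q_{m/n} are
  VQ m n.  Both languages (L over X and Q, RPL over X) share one datatype of
  formulas; truth constants are given by rationals (in L only 0 and 1 occur).\<close>

datatype var = VX nat | VQ nat nat

datatype fm =
    Var var
  | Const rat
  | Prod fm fm
  | Imp fm fm
  | And fm fm
  | Or fm fm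
  | Neg fm
  | Oplus fm fm
  | Equiv fm fm

fun fconsts :: "fm \<Rightarrow> rat set" where
  "fconsts (Var x) = {}"
| "fconsts (Const r) = {r}"
| "fconsts (Prod a b) = fconsts a \<union> fconsts b"
| "fconsts (Imp a b) = fconsts a \<union> fconsts b"
| "fconsts (And a b) = fconsts a \<union> fconsts b"
| "fconsts (Or a b) = fconsts a \<union> fconsts b"
| "fconsts (Neg a) = fconsts a"
| "fconsts (Oplus a b) = fconsts a \<union> fconsts b"
| "fconsts (Equiv a b) = fconsts a \<union> fconsts b"

fun vars :: "fm \<Rightarrow> var set" where
  "vars (Var x) = {x}"
| "vars (Const r) = {}"
| "vars (Prod a b) = vars a \<union> vars b"
| "vars (Imp a b) = vars a \<union> vars b"
| "vars (And a b) = vars a \<union> vars b"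
| "vars (Or a b) = vars a \<union> vars b"
| "vars (Neg a) = vars a"
| "vars (Oplus a b) = vars a \<union> vars b"
| "vars (Equiv a b) = vars a \<union> vars b"

definition L_fm :: "fm set" where
  "L_fm = {\<phi>. fconsts \<phi> \<subseteq> {0, 1}}"

definition RPL_fm :: "fm set" where
  "RPL_fm = {\<phi>. fconsts \<phi> \<subseteq> {r. 0 \<le> r \<and> r \<le> 1} \<and> vars \<phi> \<subseteq> range VX}"

text \<open>Axioms of L, instantiated with formulas from a language S: the four
  Lukasiewicz axioms for implication and negation, the axiom 1, and
  for every other connective a pair of implications relating it to its standard
  definition in terms of implication and negation.\<close>
inductive_set L_axioms :: "fm set \<Rightarrow> fm set" for S :: "fm set" where
  ax1: "\<lbrakk>a \<in> S; b \<in> S\<rbrakk> \<Longrightarrow> Imp a (Imp b a) \<in> L_axioms S"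
| ax2: "\<lbrakk>a \<in> S; b \<in> S; c \<in> S\<rbrakk> \<Longrightarrow> Imp (Imp a b) (Imp (Imp b c) (Imp a c)) \<in> L_axioms S"
| ax3: "\<lbrakk>a \<in> S; b \<in> S\<rbrakk> \<Longrightarrow> Imp (Imp (Imp a b) b) (Imp (Imp b a) a) \<in> L_axioms S"
| ax4: "\<lbrakk>a \<in> S; b \<in> S\<rbrakk> \<Longrightarrow> Imp (Imp (Neg b) (Neg a)) (Imp a b) \<in> L_axioms S"
| top: "Const 1 \<in> L_axioms S"
| bot1: "Imp (Const 0) (Neg (Const 1)) \<in> L_axioms S"
| bot2: "Imp (Neg (Const 1)) (Const 0) \<in> L_axioms S"
| prod1: "\<lbrakk>a \<in> S; b \<in> S\<rbrakk> \<Longrightarrow> Imp (Prod a b) (Neg (Imp a (Neg b))) \<in> L_axioms S"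
| prod2: "\<lbrakk>a \<in> S; b \<in> S\<rbrakk> \<Longrightarrow> Imp (Neg (Imp a (Neg b))) (Prod a b) \<in> L_axioms S"
| oplus1: "\<lbrakk>a \<in> S; b \<in> S\<rbrakk> \<Longrightarrow> Imp (Oplus a b) (Imp (Neg a) b) \<in> L_axioms S"
| oplus2: "\<lbrakk>a \<in> S; b \<in> S\<rbrakk> \<Longrightarrow> Imp (Imp (Neg a) b) (Oplus a b) \<in> L_axioms S"
| or1: "\<lbrakk>a \<in> S; b \<in> S\<rbrakk> \<Longrightarrow> Imp (Or a b) (Imp (Imp a b) b) \<in> L_axioms S"
| or2: "\<lbrakk>a \<in> S; b \<in> S\<rbrakk> \<Longrightarrow> Imp (Imp (Imp a b) b) (Or a b) \<in> L_axioms S"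
| and1: "\<lbrakk>a \<in> S; b \<in> S\<rbrakk> \<Longrightarrow>
     Imp (And a b) (Neg (Imp (Imp (Neg a) (Neg b)) (Neg b))) \<in> L_axioms S"
| and2: "\<lbrakk>a \<in> S; b \<in> S\<rbrakk> \<Longrightarrow>
     Imp (Neg (Imp (Imp (Neg a) (Neg b)) (Neg b))) (And a b) \<in> L_axioms S"
| equiv1: "\<lbrakk>a \<in> S; b \<in> S\<rbrakk> \<Longrightarrow>
     Imp (Equiv a b) (Neg (Imp (Imp a b) (Neg (Imp b a)))) \<in> L_axioms S"
| equiv2: "\<lbrakk>a \<in> S; b \<in> S\<rbrakk> \<Longrightarrow>
     Imp (Neg (Imp (Imp a b) (Neg (Imp b a)))) (Equiv a b) \<in> L_axioms S"

inductive derivable :: "fm set \<Rightarrow> fm set \<Rightarrow> fm \<Rightarrow> bool" for Ax T where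
  axiom: "\<phi> \<in> Ax \<Longrightarrow> derivable Ax T \<phi>"
| hyp: "\<phi> \<in> T \<Longrightarrow> derivable Ax T \<phi>"
| mp: "\<lbrakk>derivable Ax T \<phi>; derivable Ax T (Imp \<phi> \<psi>)\<rbrakk> \<Longrightarrow> derivable Ax T \<psi>"

definition L_prov :: "fm set \<Rightarrow> fm \<Rightarrow> bool" where
  "L_prov T \<phi> \<longleftrightarrow> derivable (L_axioms L_fm) T \<phi>"

definition luk_prod :: "rat \<Rightarrow> rat \<Rightarrow> rat" where "luk_prod x y = max 0 (x + y - 1)"
definition luk_imp :: "rat \<Rightarrow> rat \<Rightarrow> rat" where "luk_imp x y = min 1 (1 - x + y)"
definition luk_oplus :: "rat \<Rightarrow> rat \<Rightarrow> rat" where "luk_oplus x y = min 1 (x + y)"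
definition luk_equiv :: "rat \<Rightarrow> rat \<Rightarrow> rat" where "luk_equiv x y = 1 - \<bar>x - y\<bar>"

definition unit_rat :: "rat set" where "unit_rat = {r. 0 \<le> r \<and> r \<le> 1}"

inductive_set bookkeeping :: "fm set" where
  bk_neg: "r \<in> unit_rat \<Longrightarrow> Equiv (Neg (Const r)) (Const (1 - r)) \<in> bookkeeping"
| bk_prod: "\<lbrakk>r \<in> unit_rat; s \<in> unit_rat\<rbrakk> \<Longrightarrow>
    Equiv (Prod (Const r) (Const s)) (Const (luk_prod r s)) \<in> bookkeeping"
| bk_imp: "\<lbrakk>r \<in> unit_rat; s \<in> unit_rat\<rbrakk> \<Longrightarrow>
    Equiv (Imp (Const r) (Const s)) (Const (luk_imp r s)) \<in> bookkeeping"
| bk_and: "\<lbrakk>r \<in> unit_rat; s \<in> unit_rat\<rbrakk> \<Longrightarrow>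
    Equiv (And (Const r) (Const s)) (Const (min r s)) \<in> bookkeeping"
| bk_or: "\<lbrakk>r \<in> unit_rat; s \<in> unit_rat\<rbrakk> \<Longrightarrow>
    Equiv (Or (Const r) (Const s)) (Const (max r s)) \<in> bookkeeping"
| bk_oplus: "\<lbrakk>r \<in> unit_rat; s \<in> unit_rat\<rbrakk> \<Longrightarrow>
    Equiv (Oplus (Const r) (Const s)) (Const (luk_oplus r s)) \<in> bookkeeping"
| bk_equiv: "\<lbrakk>r \<in> unit_rat; s \<in> unit_rat\<rbrakk> \<Longrightarrow>
    Equiv (Equiv (Const r) (Const s)) (Const (luk_equiv r s)) \<in> bookkeeping"

definition RPL_prov :: "fm set \<Rightarrow> fm \<Rightarrow> bool" where
  "RPL_prov T \<phi> \<longleftrightarrow> derivable (L_axioms RPL_fm \<union> bookkeeping) T \<phi>"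

abbreviation q :: "nat \<Rightarrow> nat \<Rightarrow> fm" where "q m n \<equiv> Var (VQ m n)"

fun fpow :: "fm \<Rightarrow> nat \<Rightarrow> fm" where
  "fpow a 0 = Const 1"
| "fpow a (Suc 0) = a"
| "fpow a (Suc (Suc k)) = Prod (fpow a (Suc k)) a"

fun fmult :: "nat \<Rightarrow> fm \<Rightarrow> fm" where
  "fmult 0 a = Const 0"
| "fmult (Suc 0) a = a"
| "fmult (Suc (Suc k)) a = Oplus (fmult (Suc k) a) a"

inductive_set T_Q :: "fm set" where
  tq0: "n > 0 \<Longrightarrow> Equiv (q 0 n) (Const 0) \<in> T_Q"
| tq1: "Equiv (q 1 1) (Const 1) \<in> T_Q"
| tq2: "n \<ge> 2 \<Longrightarrow> Equiv (q 1 n) (fpow (Neg (q 1 n)) (n - 1)) \<in> T_Q"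
| tq3: "\<lbrakk>m \<le> n; n \<ge> 2\<rbrakk> \<Longrightarrow> Equiv (q m n) (fmult m (q 1 n)) \<in> T_Q"

text \<open>Translation of a rational constant: 0 and 1 stay, r = m/n in lowest terms
  in (0,1) goes to q_{m/n} (quotient_of yields the reduced fraction).\<close>
definition const_star :: "rat \<Rightarrow> fm" where
  "const_star r = (if r = 0 then Const 0 else if r = 1 then Const 1
     else Var (VQ (nat (fst (quotient_of r))) (nat (snd (quotient_of r)))))"

fun star :: "fm \<Rightarrow> fm" where
  "star (Var x) = Var x"
| "star (Const r) = const_star r"
| "star (Prod a b) = Prod (star a) (star b)"
| "star (Imp a b) = Imp (star a) (star b)"
| "star (And a b) = And (star a) (star b)"
| "star (Or a b) = Or (star a) (star b)"
| "star (Neg a) = Neg (star a)"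
| "star (Oplus a b) = Oplus (star a) (star b)"
| "star (Equiv a b) = Equiv (star a) (star b)"

end

theory Submission
  imports Defs
begin

lemma derivable_mono: "derivable A H a \<Longrightarrow> A \<subseteq> A' \<Longrightarrow> H \<subseteq> H' \<Longrightarrow> derivable A' H' a"
  by (induct rule: derivable.induct) (auto intro: derivable.intros)

locale hil =
  fixes S :: "fm set" and B :: "fm set" and H :: "fm set"
  assumes Simp: "a \<in> S \<Longrightarrow> b \<in> S \<Longrightarrow> Imp a b \<in> S"
  and Sneg: "a \<in> S \<Longrightarrow> Neg a \<in> S"
  and Sprod: "a \<in> S \<Longrightarrow> b \<in> S \<Longrightarrow> Prod a b \<in> S"
  and Soplus: "a \<in> S \<Longrightarrow> b \<in> S \<Longrightarrow> Oplus a b \<in> S"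
  and Sand: "a \<in> S \<Longrightarrow> b \<in> S \<Longrightarrow> And a b \<in> S"
  and Sor: "a \<in> S \<Longrightarrow> b \<in> S \<Longrightarrow> Or a b \<in> S"
  and Sequiv: "a \<in> S \<Longrightarrow> b \<in> S \<Longrightarrow> Equiv a b \<in> S"
  and S1: "Const 1 \<in> S"
  and S0: "Const 0 \<in> S"
begin
abbreviation pr where "pr \<equiv> derivable (L_axioms S \<union> B) H"

lemma A1: "a \<in> S \<Longrightarrow> b \<in> S \<Longrightarrow> pr (Imp a (Imp b a))"
  by (simp add: derivable.axiom L_axioms.ax1)
lemma A2: "a \<in> S \<Longrightarrow> b \<in> S \<Longrightarrow> c \<in> S \<Longrightarrow> pr (Imp (Imp a b) (Imp (Imp b c) (Imp a c)))"
  by (simp add: derivable.axiom L_axioms.ax2)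
lemma A3: "a \<in> S \<Longrightarrow> b \<in> S \<Longrightarrow> pr (Imp (Imp (Imp a b) b) (Imp (Imp b a) a))"
  by (simp add: derivable.axiom L_axioms.ax3)
lemma A4: "a \<in> S \<Longrightarrow> b \<in> S \<Longrightarrow> pr (Imp (Imp (Neg b) (Neg a)) (Imp a b))"
  by (simp add: derivable.axiom L_axioms.ax4)
lemma MP: "pr a \<Longrightarrow> pr (Imp a b) \<Longrightarrow> pr b"
  by (rule derivable.mp)
lemma top: "pr (Const 1)" by (simp add: derivable.axiom L_axioms.top)

lemma HS: "a \<in> S \<Longrightarrow> b \<in> S \<Longrightarrow> c \<in> S \<Longrightarrow> pr (Imp a b) \<Longrightarrow> pr (Imp b c) \<Longrightarrow> pr (Imp a c)"
  using MP[OF _ MP[OF _ A2]] by blast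
lemma idt: "a \<in> S \<Longrightarrow> pr (Imp a a)"
  by (metis Simp A1 A2 A3 MP)
lemma asrt1: "a \<in> S \<Longrightarrow> pr (Imp (Imp (Const 1) a) a)"
  by (metis A1 A3 MP S1 Simp local.top)
lemma weak: "a \<in> S \<Longrightarrow> b \<in> S \<Longrightarrow> pr a \<Longrightarrow> pr (Imp b a)"
  by (rule MP[OF _ A1])
lemma asrt: "b \<in> S \<Longrightarrow> c \<in> S \<Longrightarrow> pr (Imp b (Imp (Imp b c) c))"
proof -
  assume b: "b \<in> S" and c: "c \<in> S"
  have 1: "pr (Imp b (Imp (Imp c b) b))" using A1[OF b Simp[OF c b]] .
  have 2: "pr (Imp (Imp (Imp c b) b) (Imp (Imp b c) c))" using A3[OF c b] .
  show ?thesis by (rule HS[OF b _ _ 1 2]) (auto intro: Simp b c)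
qed
lemma exch: "x \<in> S \<Longrightarrow> y \<in> S \<Longrightarrow> z \<in> S \<Longrightarrow> pr (Imp x (Imp y z)) \<Longrightarrow> pr (Imp y (Imp x z))"
proof -
  assume x: "x \<in> S" and y: "y \<in> S" and z: "z \<in> S" and h: "pr (Imp x (Imp y z))"
  have yz: "Imp y z \<in> S" by (rule Simp[OF y z])
  have 1: "pr (Imp (Imp (Imp y z) z) (Imp x z))" by (rule MP[OF h A2[OF x yz z]])
  show ?thesis by (rule HS[OF y _ _ asrt[OF y z] 1]) (auto intro: Simp x y z)
qed
lemma suff: "a \<in> S \<Longrightarrow> b \<in> S \<Longrightarrow> c \<in> S \<Longrightarrow> pr (Imp b c) \<Longrightarrow> pr (Imp (Imp a b) (Imp a c))"
proof -
  assume a: "a \<in> S" and b: "b \<in> S" and c: "c \<in> S" and h: "pr (Imp b c)"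
  have "pr (Imp (Imp b c) (Imp (Imp a b) (Imp a c)))"
    by (rule exch[OF Simp[OF a b] Simp[OF b c] Simp[OF a c] A2[OF a b c]])
  then show ?thesis by (rule MP[OF h])
qed
lemma pref: "a \<in> S \<Longrightarrow> b \<in> S \<Longrightarrow> c \<in> S \<Longrightarrow> pr (Imp a b) \<Longrightarrow> pr (Imp (Imp b c) (Imp a c))"
  by (rule MP[OF _ A2])
lemma dn1: "a \<in> S \<Longrightarrow> pr (Imp (Neg (Neg a)) a)"
proof -
  assume a: "a \<in> S"
  have na: "Neg a \<in> S" and nna: "Neg (Neg a) \<in> S" using a Sneg by auto
  have n1: "Neg (Neg (Const 1)) \<in> S" "Neg (Const 1) \<in> S" using S1 Sneg by auto
  have 1: "pr (Imp (Neg (Neg a)) (Imp (Neg (Neg (Const 1))) (Neg (Neg a))))" by (rule A1[OF nna n1(1)])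
  have 2: "pr (Imp (Imp (Neg (Neg (Const 1))) (Neg (Neg a))) (Imp (Neg a) (Neg (Const 1))))"
    by (rule A4[OF na n1(2)])
  have 3: "pr (Imp (Neg (Neg a)) (Imp (Neg a) (Neg (Const 1))))"
    by (rule HS[OF nna Simp[OF n1(1) nna] Simp[OF na n1(2)] 1 2])
  have 4: "pr (Imp (Imp (Neg a) (Neg (Const 1))) (Imp (Const 1) a))" by (rule A4[OF S1 a])
  have 5: "pr (Imp (Neg (Neg a)) (Imp (Const 1) a))"
    by (rule HS[OF nna Simp[OF na n1(2)] Simp[OF S1 a] 3 4])
  show ?thesis by (rule HS[OF nna Simp[OF S1 a] a 5 asrt1[OF a]])
qed
lemma dn2: "a \<in> S \<Longrightarrow> pr (Imp a (Neg (Neg a)))"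
proof -
  assume a: "a \<in> S"
  have nna: "Neg (Neg a) \<in> S" using a Sneg by auto
  show ?thesis by (rule MP[OF dn1[OF Sneg[OF a]] A4[OF a nna]])
qed
lemma contrap: "a \<in> S \<Longrightarrow> b \<in> S \<Longrightarrow> pr (Imp a b) \<Longrightarrow> pr (Imp (Neg b) (Neg a))"
proof -
  assume a: "a \<in> S" and b: "b \<in> S" and h: "pr (Imp a b)"
  have nna: "Neg (Neg a) \<in> S" and nnb: "Neg (Neg b) \<in> S" using a b Sneg by auto
  have "pr (Imp (Neg (Neg a)) b)" by (rule HS[OF nna a b dn1[OF a] h])
  then have "pr (Imp (Neg (Neg a)) (Neg (Neg b)))" by (rule HS[OF nna b nnb _ dn2[OF b]])
  then show ?thesis by (rule MP[OF _ A4[OF Sneg[OF b] Sneg[OF a]]])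
qed
lemma ax: "a \<in> L_axioms S \<Longrightarrow> pr a" by (simp add: derivable.axiom)
lemma to1: "a \<in> S \<Longrightarrow> pr a \<Longrightarrow> pr (Imp a (Const 1))"
  by (rule weak[OF S1 _ top])
lemma from1: "a \<in> S \<Longrightarrow> pr a \<Longrightarrow> pr (Imp (Const 1) a)"
  by (rule weak[OF _ S1])
end

definition lrel :: "fm set \<Rightarrow> fm set \<Rightarrow> fm set \<Rightarrow> (fm \<Rightarrow> fm) \<Rightarrow> fm \<Rightarrow> fm \<Rightarrow> bool" where
  "lrel S B H nr a b \<longleftrightarrow> derivable (L_axioms S \<union> B) H (Imp (nr a) (nr b))
     \<and> derivable (L_axioms S \<union> B) H (Imp (nr b) (nr a))"

locale hiln = hil +
  fixes nr :: "fm \<Rightarrow> fm"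
  assumes nr_S: "nr a \<in> S"
  and nr_Imp: "nr (Imp a b) = Imp (nr a) (nr b)"
  and nr_Neg: "nr (Neg a) = Neg (nr a)"
  and nr_Prod: "nr (Prod a b) = Prod (nr a) (nr b)"
  and nr_Oplus: "nr (Oplus a b) = Oplus (nr a) (nr b)"
  and nr_And: "nr (And a b) = And (nr a) (nr b)"
  and nr_Or: "nr (Or a b) = Or (nr a) (nr b)"
  and nr_Equiv: "nr (Equiv a b) = Equiv (nr a) (nr b)"
  and nr_C0: "nr (Const 0) = Const 0"
  and nr_C1: "nr (Const 1) = Const 1"
begin
abbreviation R where "R \<equiv> lrel S B H nr"
lemmas nrs = nr_Imp nr_Neg nr_Prod nr_Oplus nr_And nr_Or nr_Equiv nr_C0 nr_C1

lemma R_refl: "R a a" unfolding lrel_def using idt[OF nr_S] by simp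
lemma R_sym: "R a b \<Longrightarrow> R b a" unfolding lrel_def by simp
lemma R_trans: "R a b \<Longrightarrow> R b c \<Longrightarrow> R a c"
  unfolding lrel_def using HS[OF nr_S nr_S nr_S] by blast
lemma R_equivp: "equivp R"
  by (rule equivpI) (auto simp: reflp_def symp_def transp_def intro: R_refl R_sym R_trans)

lemma imp_cong: "a \<in> S \<Longrightarrow> a' \<in> S \<Longrightarrow> b \<in> S \<Longrightarrow> b' \<in> S \<Longrightarrow> pr (Imp a' a) \<Longrightarrow> pr (Imp b b')
  \<Longrightarrow> pr (Imp (Imp a b) (Imp a' b'))"
  by (rule HS[OF Simp Simp Simp pref suff]) assumption+

lemma R_Imp: "R a a' \<Longrightarrow> R b b' \<Longrightarrow> R (Imp a b) (Imp a' b')"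
  unfolding lrel_def nr_Imp using imp_cong[OF nr_S nr_S nr_S nr_S] by blast
lemma R_Neg: "R a a' \<Longrightarrow> R (Neg a) (Neg a')"
  unfolding lrel_def nr_Neg using contrap[OF nr_S nr_S] by blast

lemma R_one: "R a (Const 1) \<longleftrightarrow> pr (nr a)"
  unfolding lrel_def nr_C1 using to1[OF nr_S] from1[OF nr_S] MP[OF top] by blast
lemma R_W1: "R (Imp (Const 1) x) x"
  unfolding lrel_def nr_Imp nr_C1 using asrt1[OF nr_S] A1[OF nr_S S1] by blast
lemma R_W2: "R (Imp (Imp x y) (Imp (Imp y z) (Imp x z))) (Const 1)"
  unfolding R_one nrs by (rule A2[OF nr_S nr_S nr_S])
lemma R_W3: "R (Imp (Imp x y) y) (Imp (Imp y x) x)"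
  unfolding lrel_def nrs using A3[OF nr_S nr_S] by blast
lemma R_W4: "R (Imp (Imp (Neg x) (Neg y)) (Imp y x)) (Const 1)"
  unfolding R_one nrs by (rule A4[OF nr_S nr_S])

lemma R_Prod: "R (Prod a b) (Neg (Imp a (Neg b)))"
  unfolding lrel_def nrs using ax[OF L_axioms.prod1[OF nr_S nr_S]] ax[OF L_axioms.prod2[OF nr_S nr_S]] by blast
lemma R_Oplus: "R (Oplus a b) (Imp (Neg a) b)"
  unfolding lrel_def nrs using ax[OF L_axioms.oplus1[OF nr_S nr_S]] ax[OF L_axioms.oplus2[OF nr_S nr_S]] by blast
lemma R_Or: "R (Or a b) (Imp (Imp a b) b)"
  unfolding lrel_def nrs using ax[OF L_axioms.or1[OF nr_S nr_S]] ax[OF L_axioms.or2[OF nr_S nr_S]] by blast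
lemma R_And: "R (And a b) (Neg (Imp (Imp (Neg a) (Neg b)) (Neg b)))"
  unfolding lrel_def nrs using ax[OF L_axioms.and1[OF nr_S nr_S]] ax[OF L_axioms.and2[OF nr_S nr_S]] by blast
lemma R_Equiv: "R (Equiv a b) (Neg (Imp (Imp a b) (Neg (Imp b a))))"
  unfolding lrel_def nrs using ax[OF L_axioms.equiv1[OF nr_S nr_S]] ax[OF L_axioms.equiv2[OF nr_S nr_S]] by blast
lemma R_C0: "R (Const 0) (Neg (Const 1))"
  unfolding lrel_def nrs using ax[OF L_axioms.bot1] ax[OF L_axioms.bot2] by blast
end

locale wajs =
  fixes imp :: "'a \<Rightarrow> 'a \<Rightarrow> 'a"
    and neg :: "'a \<Rightarrow> 'a"
    and one :: 'a
  assumes W1: "imp one x = x"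
  and W2: "imp (imp x y) (imp (imp y z) (imp x z)) = one"
  and W3: "imp (imp x y) y = imp (imp y x) x"
  and W4: "imp (imp (neg x) (neg y)) (imp y x) = one"
begin

lemma refl1: "imp x x = one" by (metis W1 W2)
lemma imp1: "imp x one = one" by (metis W1 W2 W3)
lemma antisym: "imp x y = one \<Longrightarrow> imp y x = one \<Longrightarrow> x = y" by (metis W1 W3)
lemma K: "imp x (imp y x) = one" by (metis W1 W2 W3)
lemma nn: "neg (neg x) = x" by (metis W1 W2 W3 W4)
lemma trans1: "imp x y = one \<Longrightarrow> imp y z = one \<Longrightarrow> imp x z = one" by (metis W1 W2)
lemma contra: "imp (neg y) (neg x) = imp x y" by (metis W4 local.antisym nn)
lemma mono_l: "imp a b = one \<Longrightarrow> imp (imp b c) (imp a c) = one" by (metis W1 W2)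
lemma mono_r: "imp b c = one \<Longrightarrow> imp (imp a b) (imp a c) = one" by (metis W1 W2)
lemma asrt: "imp y (imp (imp y z) z) = one" by (metis K W3)
lemma exch_le: "imp (imp x (imp y z)) (imp y (imp x z)) = one"
  using W2 asrt mono_l trans1 by blast
lemma exch: "imp x (imp y z) = imp y (imp x z)"
  by (meson exch_le local.antisym)
lemma resid: "imp (neg (imp x (neg y))) z = imp x (imp y z)"
  by (metis contra exch nn)
lemma lub: "imp x z = one \<Longrightarrow> imp y z = one \<Longrightarrow> imp (imp (imp x y) y) z = one"
  by (metis W1 W3 mono_l)
lemma lem5: "imp (imp x y) (imp y x) = imp y x"
  by (smt (verit, best) K W1 W3 contra exch)
lemma prel: "imp (imp (imp x y) (imp y x)) (imp y x) = one"
  by (simp add: lem5 refl1)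

abbreviation zero where "zero \<equiv> neg one"
abbreviation oplus where "oplus x y \<equiv> imp (neg x) y"
abbreviation odot where "odot x y \<equiv> neg (imp x (neg y))"
abbreviation join where "join x y \<equiv> imp (imp x y) y"
abbreviation meet where "meet x y \<equiv> neg (join (neg x) (neg y))"
abbreviation le where "le x y \<equiv> imp x y = one"

lemma oplus_comm: "oplus x y = oplus y x" by (metis contra nn)
lemma oplus_assoc: "oplus (oplus x y) z = oplus x (oplus y z)" by (metis resid nn)
lemma odot_comm: "odot x y = odot y x" by (metis contra nn)
lemma odot_assoc: "odot (odot x y) z = odot x (odot y z)" by (simp add: nn resid)
lemma oplus_zero: "oplus zero x = x" by (simp add: nn W1)
lemma odot_one: "odot one x = x" by (metis W1 contra odot_comm)
lemma oplus_one: "oplus one x = one" by (metis imp1 oplus_comm)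
lemma join_comm: "join x y = join y x" by (rule W3)
lemma join_ub1: "le x (join x y)" by (metis asrt)
lemma join_ub2: "le y (join x y)" by (metis K)
lemma join_lub: "le x z \<Longrightarrow> le y z \<Longrightarrow> le (join x y) z" by (rule lub)
lemma meet_lb1: "le (meet x y) x" by (metis contra nn asrt)
lemma meet_lb2: "le (meet x y) y" by (metis nn W1 asrt join_comm W4)
lemma meet_glb: "le z x \<Longrightarrow> le z y \<Longrightarrow> le z (meet x y)"
  by (metis contra nn join_lub)
lemma meet_div: "meet x y = odot x (imp x y)" by (metis contra W1 join_comm)
lemma I2: "oplus (meet x y) (odot x (neg y)) = x" by (metis K W1 contra join_comm)
lemma odot_mono: "le x y \<Longrightarrow> le (odot x z) (odot y z)" by (simp add: contra mono_l)
lemma oplus_mono: "le x y \<Longrightarrow> le (oplus x z) (oplus y z)" by (simp add: contra mono_l)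
lemma le_oplus: "le x (oplus x y)" by (metis K oplus_comm)
lemma odot_le: "le (odot x y) x" by (metis le_oplus contra nn)
lemma le_refl: "le x x" by (rule refl1)
lemma join_le: "le x y \<Longrightarrow> join x y = y" by (simp add: W1)
lemma meet_le: "le x y \<Longrightarrow> meet x y = x" by (metis contra join_comm W1 nn)
lemma odot_neg: "odot x (neg x) = zero" by (simp add: nn refl1)
lemma le_zero: "le zero x" by (metis K W1 contra)

primrec mult :: "nat \<Rightarrow> 'a \<Rightarrow> 'a" where
  "mult 0 x = zero" | "mult (Suc k) x = oplus (mult k x) x"
primrec pw :: "nat \<Rightarrow> 'a \<Rightarrow> 'a" where
  "pw 0 x = one" | "pw (Suc k) x = odot (pw k x) x"

lemma neg_mult: "neg (mult k x) = pw k (neg x)"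
  by (induct k) (simp_all add: nn)
lemma mult_add: "mult (k + l) x = oplus (mult k x) (mult l x)"
proof (induct l)
  case 0 then show ?case by (metis oplus_comm oplus_zero mult.simps(1) add_0_right)
next
  case (Suc l) then show ?case by (simp add: oplus_assoc)
qed
lemma mult_mono_k: "k \<le> l \<Longrightarrow> le (mult k x) (mult l x)"
  by (metis le_Suc_ex le_oplus mult_add)
lemma mult_mono_x: "le x y \<Longrightarrow> le (mult k x) (mult k y)"
proof (induct k)
  case 0 then show ?case by (simp add: refl1)
next
  case (Suc k)
  have "le (oplus (mult k x) x) (oplus (mult k y) x)" using Suc oplus_mono by blast
  moreover have "le (oplus (mult k y) x) (oplus (mult k y) y)" using Suc(2) oplus_mono oplus_comm by metis
  ultimately show ?case using trans1 by simp
qed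

definition sol :: "nat \<Rightarrow> 'a \<Rightarrow> bool" where
  "sol n u \<longleftrightarrow> n \<ge> 1 \<and> u = pw (n - 1) (neg u)"

lemma sol_n: assumes "sol n u" shows "mult n u = one"
proof -
  obtain m where n: "n = Suc m" and u: "u = pw m (neg u)" using assms unfolding sol_def
    by (metis One_nat_def Suc_pred' diff_Suc_1 le_numeral_extra(2) less_eq_Suc_le)
  have "neg (mult n u) = odot u (neg u)" using u n by (simp add: neg_mult nn)
  then show ?thesis by (metis odot_neg nn)
qed
lemma sol_n1: assumes "sol n u" shows "mult (n - 1) u = neg u"
  using assms unfolding sol_def by (metis neg_mult nn)
lemma sol_ge: assumes "sol n u" "n \<le> k" shows "mult k u = one"
  by (metis assms le_Suc_ex mult_add oplus_one sol_n)

lemma sol_le_pw: assumes "sol n u" "k \<le> n" shows "le (mult (n - k) u) (pw k (neg u))"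
  using assms(2)
proof (induct k)
  case 0 then show ?case by (simp add: imp1)
next
  case (Suc k)
  have n: "n - k = Suc (n - Suc k)" using Suc by simp
  have "le (odot (mult (n - k) u) (neg u)) (pw (Suc k) (neg u))"
    using Suc odot_mono by simp
  moreover have "odot (mult (n - k) u) (neg u) = meet (mult (n - Suc k) u) (neg u)"
    using n by (simp add: nn)
  moreover have "le (mult (n - Suc k) u) (neg u)"
    using sol_n1[OF assms(1)] mult_mono_k by (metis diff_le_mono2 le_add1 plus_1_eq_Suc Suc(2) diff_Suc_eq_diff_pred)
  ultimately show ?case using meet_le by metis
qed

lemma sol_neg: assumes "sol n u" "k \<le> n" shows "neg (mult k u) = mult (n - k) u"
proof -
  have a: "le (mult (n - k) u) (neg (mult k u))" using sol_le_pw[OF assms] by (simp add: neg_mult)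
  have "oplus (mult k u) (mult (n - k) u) = one" using assms sol_n mult_add by (metis le_add_diff_inverse)
  then have b: "le (neg (mult k u)) (mult (n - k) u)" by simp
  show ?thesis using a b antisym by blast
qed

end

context wajs begin
lemma sol_oplus: assumes "sol n u" shows "oplus (mult k u) (mult l u) = mult (min n (k + l)) u"
proof (cases "k + l \<le> n")
  case True then show ?thesis by (simp add: mult_add[symmetric])
next
  case False then show ?thesis using sol_ge[OF assms, of "k+l"] sol_ge[OF assms, of n] by (simp add: mult_add[symmetric])
qed

lemma odot_via: "odot a b = neg (oplus (neg a) (neg b))" by (simp add: nn)
lemma imp_via: "imp a b = oplus (neg a) b" by (simp add: nn)

lemma sol_odot: assumes "sol n u" "k \<le> n" "l \<le> n"
  shows "odot (mult k u) (mult l u) = mult (k + l - n) u"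
proof -
  have "odot (mult k u) (mult l u) = neg (oplus (mult (n - k) u) (mult (n - l) u))"
    using assms by (subst odot_via) (simp add: sol_neg)
  also have "\<dots> = neg (mult (min n (n - k + (n - l))) u)" using sol_oplus[OF assms(1)] by simp
  also have "\<dots> = mult (n - min n (n - k + (n - l))) u" using assms sol_neg by simp
  also have "n - min n (n - k + (n - l)) = k + l - n" using assms by simp
  finally show ?thesis .
qed

lemma sol_imp: assumes "sol n u" "k \<le> n" "l \<le> n"
  shows "imp (mult k u) (mult l u) = mult (min n (n - k + l)) u"
proof -
  have "imp (mult k u) (mult l u) = oplus (neg (mult k u)) (mult l u)" by (simp add: nn)
  also have "\<dots> = oplus (mult (n - k) u) (mult l u)" using assms sol_neg by simp
  also have "\<dots> = mult (min n (n - k + l)) u" using sol_oplus[OF assms(1)] by simp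
  finally show ?thesis .
qed

lemma meet_comm: "meet x y = meet y x" by (metis join_comm)

lemma sol_meet: "meet (mult k u) (mult l u) = mult (min k l) u"
proof (cases "k \<le> l")
  case True then show ?thesis using meet_le mult_mono_k by simp
next
  case False then show ?thesis using meet_le mult_mono_k meet_comm by (metis min_def nle_le)
qed
lemma sol_join: "join (mult k u) (mult l u) = mult (max k l) u"
proof (cases "k \<le> l")
  case True then show ?thesis using join_le mult_mono_k by (metis max.absorb2)
next
  case False then show ?thesis using join_le mult_mono_k join_comm by (metis max_def nle_le)
qed

lemma odot_zero_le: "odot p r = zero \<Longrightarrow> le p (neg r)"
  by (metis nn)

lemma disj1: assumes "meet p qq = zero" shows "odot p (neg qq) = p"
proof -
  have "odot p (imp p qq) = zero" using assms meet_div by simp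
  then have "le p (neg (imp p qq))" by (rule odot_zero_le)
  then have "le p (odot p (neg qq))" by (simp add: nn)
  then show ?thesis using odot_le antisym by blast
qed

lemma odot_mono2: "le x y \<Longrightarrow> le (odot z x) (odot z y)"
  by (metis odot_comm odot_mono)

lemma disj2: assumes "odot p (neg qq) = p" shows "meet p qq = zero"
proof -
  have "meet p qq = odot (odot p (neg qq)) (imp p qq)" using assms meet_div by simp
  also have "\<dots> = odot p (odot (neg qq) (imp p qq))" by (rule odot_assoc)
  finally have e: "meet p qq = odot p (odot (neg qq) (imp p qq))" .
  have "le (odot (neg qq) (imp p qq)) (neg p)"
    by (metis contra nn odot_comm refl1 resid)
  then have "le (meet p qq) (odot p (neg p))" using e odot_mono2 by simp
  then have "le (meet p qq) zero" by (simp add: odot_neg)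
  then show ?thesis using le_zero antisym by blast
qed

lemma disj_pw: assumes "odot p (neg qq) = p" shows "odot p (pw k (neg qq)) = p"
proof (induct k)
  case 0 then show ?case by (metis odot_comm odot_one pw.simps(1))
next
  case (Suc k)
  have "odot p (pw (Suc k) (neg qq)) = odot (odot p (pw k (neg qq))) (neg qq)"
    by (simp add: odot_assoc)
  then show ?case using Suc assms by simp
qed

lemma disj_mult: assumes "meet p qq = zero" shows "meet p (mult k qq) = zero"
proof -
  have "odot p (neg (mult k qq)) = p" using disj_pw[OF disj1[OF assms]] by (simp add: neg_mult)
  then show ?thesis by (rule disj2)
qed

lemma mult_oplus: "mult k (oplus a b) = oplus (mult k a) (mult k b)"
proof (induct k)
  case 0 then show ?case by (simp add: oplus_zero)
next
  case (Suc k)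
  then show ?case by (metis mult.simps(2) oplus_assoc oplus_comm)
qed

lemma prel_join: "join (imp u v) (imp v u) = one" by (rule prel)

lemma uniq_le: assumes u: "sol n u" and v: "sol n v" shows "le u v"
proof -
  define w where "w = meet u v"
  define p where "p = odot u (neg v)"
  define qq where "qq = odot v (neg u)"
  have wu: "u = oplus w p" unfolding w_def p_def by (rule I2[symmetric])
  have wv: "v = oplus w qq" unfolding w_def qq_def by (metis I2 meet_comm)
  have pq: "meet p qq = zero" unfolding p_def qq_def by (simp add: nn prel)
  have "meet p (mult n qq) = zero" using disj_mult[OF pq] .
  then have "meet (mult n qq) p = zero" by (simp add: meet_comm)
  then have "meet (mult n qq) (mult n p) = zero" by (rule disj_mult)
  then have z: "meet (mult n p) (mult n qq) = zero" by (simp add: meet_comm)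
  have "oplus (mult n w) (mult n p) = one" using sol_n[OF u] wu mult_oplus by metis
  then have a: "le (neg (mult n w)) (mult n p)" by simp
  have "oplus (mult n w) (mult n qq) = one" using sol_n[OF v] wv mult_oplus by metis
  then have b: "le (neg (mult n w)) (mult n qq)" by simp
  have "le (neg (mult n w)) zero" using meet_glb[OF a b] z by simp
  then have "neg (mult n w) = zero" using le_zero antisym by blast
  then have nw: "mult n w = one" by (metis nn)
  have n1: "n = Suc (n - 1)" using u unfolding sol_def by simp
  then have "oplus (mult (n - 1) w) w = one" using nw by (metis mult.simps(2))
  then have c: "le (neg w) (mult (n - 1) w)" by (metis oplus_comm)
  have "le w u" unfolding w_def by (rule meet_lb1)
  then have "le (mult (n - 1) w) (mult (n - 1) u)" by (rule mult_mono_x)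
  then have "le (neg w) (neg u)" using c sol_n1[OF u] trans1 by metis
  then have "le u w" by (metis contra nn)
  then show ?thesis using meet_lb2 trans1 unfolding w_def by blast
qed

lemma uniq: "sol n u \<Longrightarrow> sol n v \<Longrightarrow> u = v"
  using uniq_le antisym by blast

lemma pw_mult: assumes "sol N u" "d \<le> N"
  shows "pw j (mult (N - d) u) = mult (N - j * d) u"
proof (induct j)
  case 0 then show ?case using sol_n[OF assms(1)] by simp
next
  case (Suc j)
  have "pw (Suc j) (mult (N - d) u) = odot (mult (N - j * d) u) (mult (N - d) u)"
    using Suc by simp
  also have "\<dots> = mult (N - j * d + (N - d) - N) u" using sol_odot assms by simp
  also have "N - j * d + (N - d) - N = N - Suc j * d" using assms by simp
  finally show ?case .
qed

lemma sol_sub: assumes "sol (d * n) u" "n \<ge> 1" "d \<ge> 1"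
  shows "sol n (mult d u)"
proof -
  have dn: "d \<le> d * n" using assms by simp
  have "neg (mult d u) = mult (d * n - d) u" using sol_neg[OF assms(1) dn] .
  then have "pw (n - 1) (neg (mult d u)) = mult (d * n - (n - 1) * d) u"
    using pw_mult[OF assms(1) dn] by simp
  also have "d * n - (n - 1) * d = d" using assms by (simp add: algebra_simps diff_mult_distrib)
  finally show ?thesis unfolding sol_def using assms by simp
qed


lemma mult_mult: "mult a (mult b x) = mult (a * b) x"
proof (induct a)
  case 0 then show ?case by simp
next
  case (Suc a) then show ?case by (simp add: mult_add add.commute oplus_comm)
qed

lemma eqv_refl: "odot (imp x x) (imp x x) = one"
  by (metis odot_one refl1)
lemma eqv_one: assumes "odot (imp x y) (imp y x) = one" shows "x = y"
proof -
  have "le one (imp x y)" using odot_le assms by metis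
  then have a: "imp x y = one" by (simp add: W1)
  have "le one (imp y x)" using odot_le odot_comm assms by metis
  then have b: "imp y x = one" by (simp add: W1)
  show ?thesis using a b antisym by blast
qed
end

fun nrmL :: "fm \<Rightarrow> fm" where
  "nrmL (Var x) = Var x"
| "nrmL (Const r) = (if r = 0 \<or> r = 1 then Const r else Const 0)"
| "nrmL (Prod a b) = Prod (nrmL a) (nrmL b)"
| "nrmL (Imp a b) = Imp (nrmL a) (nrmL b)"
| "nrmL (And a b) = And (nrmL a) (nrmL b)"
| "nrmL (Or a b) = Or (nrmL a) (nrmL b)"
| "nrmL (Neg a) = Neg (nrmL a)"
| "nrmL (Oplus a b) = Oplus (nrmL a) (nrmL b)"
| "nrmL (Equiv a b) = Equiv (nrmL a) (nrmL b)"

lemma nrmL_S: "nrmL a \<in> L_fm" by (induct a) (auto simp: L_fm_def)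
lemma nrmL_id: "a \<in> L_fm \<Longrightarrow> nrmL a = a" by (induct a) (auto simp: L_fm_def)

interpretation hL: hiln L_fm "{}" T_Q nrmL
  by unfold_locales (use nrmL_S in \<open>auto simp: L_fm_def\<close>)

quotient_type lindL = fm / "lrel L_fm {} T_Q nrmL"
  by (rule hL.R_equivp)

lift_definition limpL :: "lindL \<Rightarrow> lindL \<Rightarrow> lindL" is Imp by (rule hL.R_Imp)
lift_definition lnegL :: "lindL \<Rightarrow> lindL" is Neg by (rule hL.R_Neg)
lift_definition loneL :: "lindL" is "Const 1" .

interpretation wL: wajs limpL lnegL loneL
proof
  fix x y z
  show "limpL loneL x = x" by transfer (rule hL.R_W1)
  show "limpL (limpL x y) (limpL (limpL y z) (limpL x z)) = loneL" by transfer (rule hL.R_W2)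
  show "limpL (limpL x y) y = limpL (limpL y x) x" by transfer (rule hL.R_W3)
  show "limpL (limpL (lnegL x) (lnegL y)) (limpL y x) = loneL" by transfer (rule hL.R_W4)
qed


abbreviation clL where "clL \<equiv> abs_lindL"

lemma clL_eq: "clL a = clL b \<longleftrightarrow> lrel L_fm {} T_Q nrmL a b"
  by (simp add: lindL.abs_eq_iff)
lemma clL_Imp: "clL (Imp a b) = limpL (clL a) (clL b)" by (simp add: limpL.abs_eq)
lemma clL_Neg: "clL (Neg a) = lnegL (clL a)" by (simp add: lnegL.abs_eq)
lemma clL_C1: "clL (Const 1) = loneL" by (simp add: loneL.abs_eq)
lemma clL_Prod: "clL (Prod a b) = wL.odot (clL a) (clL b)"
  using hL.R_Prod clL_eq clL_Imp clL_Neg by metis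
lemma clL_Oplus: "clL (Oplus a b) = wL.oplus (clL a) (clL b)"
  using hL.R_Oplus clL_eq clL_Imp clL_Neg by metis
lemma clL_Or: "clL (Or a b) = wL.join (clL a) (clL b)"
  using hL.R_Or clL_eq clL_Imp by metis
lemma clL_And: "clL (And a b) = wL.meet (clL a) (clL b)"
  using hL.R_And clL_eq clL_Imp clL_Neg by metis
lemma clL_Equiv: "clL (Equiv a b) = wL.odot (limpL (clL a) (clL b)) (limpL (clL b) (clL a))"
  using hL.R_Equiv clL_eq clL_Imp clL_Neg by metis
lemma clL_C0: "clL (Const 0) = wL.zero"
  using hL.R_C0 clL_eq clL_C1 clL_Neg by metis
lemmas clL_simps = clL_Imp clL_Neg clL_C1 clL_Prod clL_Oplus clL_Or clL_And clL_Equiv clL_C0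

lemma clL_one: "clL a = loneL \<longleftrightarrow> derivable (L_axioms L_fm) T_Q (nrmL a)"
  using hL.R_one[of a] clL_eq[of a "Const 1"] clL_C1 by simp

lemma L_prov_cl: "a \<in> L_fm \<Longrightarrow> clL a = loneL \<Longrightarrow> L_prov T_Q a"
  unfolding L_prov_def clL_one by (simp add: nrmL_id)

lemma fconsts_fpow: "fconsts (fpow a k) \<subseteq> fconsts a \<union> {1}"
  by (induct a k rule: fpow.induct) auto
lemma fconsts_fmult: "fconsts (fmult k a) \<subseteq> fconsts a \<union> {0}"
  by (induct k a rule: fmult.induct) auto

lemma T_Q_L: "a \<in> T_Q \<Longrightarrow> a \<in> L_fm"
proof (induct rule: T_Q.induct)
  case (tq2 n) then show ?case using fconsts_fpow[of "Neg (q 1 n)" "n - 1"] by (auto simp: L_fm_def)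
next
  case (tq3 m n) then show ?case using fconsts_fmult[of m "q 1 n"] by (auto simp: L_fm_def)
qed (auto simp: L_fm_def)

lemma T_Q_one: "a \<in> T_Q \<Longrightarrow> clL a = loneL"
  unfolding clL_one using T_Q_L nrmL_id derivable.hyp by metis

lemma T_Q_eq: "Equiv a b \<in> T_Q \<Longrightarrow> clL a = clL b"
  using T_Q_one clL_Equiv wL.eqv_one by metis

lemma clL_fpow: "clL (fpow a k) = wL.pw k (clL a)"
proof (induct a k rule: fpow.induct)
  case (1 a) then show ?case by (simp add: clL_C1)
next
  case (2 a) then show ?case by (simp add: wL.odot_one)
next
  case (3 a k) then show ?case by (simp add: clL_Prod)
qed
lemma clL_fmult: "clL (fmult k a) = wL.mult k (clL a)"
proof (induct k a rule: fmult.induct)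
  case (1 a) then show ?case by (simp add: clL_C0)
next
  case (2 a) then show ?case by (simp add: wL.oplus_zero)
next
  case (3 k a) then show ?case by (simp add: clL_Oplus)
qed

definition uL :: "nat \<Rightarrow> lindL" where "uL n = clL (q 1 n)"

lemma sol_uL: "1 \<le> n \<Longrightarrow> wL.sol n (uL n)"
proof (cases "n = 1")
  case True
  then have "uL n = loneL" unfolding uL_def using T_Q_eq[OF T_Q.tq1] clL_C1 by simp
  then show ?thesis using True unfolding wL.sol_def by simp
next
  case False
  assume "1 \<le> n"
  then have n2: "n \<ge> 2" using False by simp
  have "uL n = wL.pw (n - 1) (lnegL (uL n))"
    unfolding uL_def using T_Q_eq[OF T_Q.tq2[OF n2]] clL_fpow clL_Neg by simp
  then show ?thesis using n2 unfolding wL.sol_def by simp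
qed

lemma clL_q: assumes "1 \<le> n" "m \<le> n" shows "clL (q m n) = wL.mult m (uL n)"
proof (cases "n \<ge> 2")
  case True
  then show ?thesis using T_Q_eq[OF T_Q.tq3[OF assms(2) True]] clL_fmult uL_def by simp
next
  case False
  then have n: "n = 1" using assms by simp
  show ?thesis
  proof (cases "m = 0")
    case True then show ?thesis using T_Q_eq[OF T_Q.tq0, of n] n clL_C0 by simp
  next
    case False then have "m = 1" using assms n by simp
    then show ?thesis using n uL_def wL.oplus_zero by simp
  qed
qed

lemma uL_div: assumes "1 \<le> n" "1 \<le> d" shows "uL n = wL.mult d (uL (d * n))"
proof -
  have "wL.sol (d * n) (uL (d * n))" using sol_uL assms by simp
  then have "wL.sol n (wL.mult d (uL (d * n)))" using wL.sol_sub assms by blast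
  then show ?thesis using wL.uniq sol_uL[OF assms(1)] by blast
qed

lemma qdiv:
  assumes qr: "quotient_of r = (p, d)" and r: "r = of_nat k / of_nat N" and N: "N \<ge> 1"
  shows "d dvd int N \<and> int k = p * (int N div d)"
proof -
  have d: "d > 0" using quotient_of_denom_pos[OF qr] .
  have cp: "coprime p d" using quotient_of_coprime[OF qr] .
  have "of_int p / of_int d = (of_nat k / of_nat N :: rat)" using quotient_of_div[OF qr] r by simp
  then have "of_int p * of_nat N = (of_int (int k) * of_int d :: rat)" using d N
    by (simp add: field_simps)
  then have e: "p * int N = int k * d" by (metis of_int_eq_iff of_int_mult of_int_of_nat_eq)
  then have "d dvd p * int N" by simp
  then have dv: "d dvd int N" using cp coprime_dvd_mult_right_iff[of d p "int N"] by (simp add: coprime_commute)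
  then obtain e' where e': "int N = d * e'" by blast
  then have "p * d * e' = int k * d" using e by (simp add: ac_simps)
  then have "int k = p * e'" using d by (simp add: ac_simps)
  then show ?thesis using dv e' d by simp
qed

lemma clL_cs: assumes N: "1 \<le> N" and k: "k \<le> N" and r: "r = of_nat k / of_nat N"
  shows "clL (const_star r) = wL.mult k (uL N)"
proof -
  consider "k = 0" | "k = N" | "0 < k" "k < N" using k by linarith
  then show ?thesis
  proof cases
    case 1 then show ?thesis using r by (simp add: const_star_def clL_C0)
  next
    case 2 then show ?thesis using r N wL.sol_n[OF sol_uL[OF N]] by (simp add: const_star_def clL_C1)
  next
    case 3
    have r0: "r \<noteq> 0" "r \<noteq> 1" using 3 r N by (auto simp: field_simps)
    obtain p d where qr: "quotient_of r = (p, d)" by (cases "quotient_of r") auto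
    have d: "d > 0" using quotient_of_denom_pos[OF qr] .
    obtain dv: "d dvd int N" and kk: "int k = p * (int N div d)" using qdiv[OF qr r N] by blast
    have rpd: "r = of_int p / of_int d" using quotient_of_div[OF qr] .
    have g: "int N div d \<ge> 0" using d by (simp add: pos_imp_zdiv_nonneg_iff)
    have "p * (int N div d) > 0" using kk 3 by simp
    then have p0: "p > 0" using g by (auto simp: zero_less_mult_iff)
    have "r \<le> 1" using r k N by (simp add: divide_le_eq_1)
    then have pd: "p \<le> d" using rpd d by (simp add: field_simps)
    define e where "e = nat (int N div d)"
    have "int (e * nat d) = (int N div d) * d" using g d unfolding e_def by simp
    also have "\<dots> = int N" using dv by simp
    finally have eN: "e * nat d = N" by (simp only: of_nat_eq_iff)
    have e1: "1 \<le> e" using eN N by (cases e) auto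
    have "int (nat p * e) = p * (int N div d)" using p0 g unfolding e_def by simp
    then have "int (nat p * e) = int k" using kk by simp
    then have kpe: "k = nat p * e" by (simp only: of_nat_eq_iff)
    have cs: "const_star r = q (nat p) (nat d)" using r0 qr by (simp add: const_star_def)
    have "clL (q (nat p) (nat d)) = wL.mult (nat p) (uL (nat d))"
      using clL_q d pd by simp
    also have "uL (nat d) = wL.mult e (uL N)" using uL_div[of "nat d" e] d e1 eN by simp
    finally show ?thesis using cs kpe wL.mult_mult by simp
  qed
qed

lemma frac1: assumes r: "r \<in> unit_rat" and M: "M \<ge> 1" and dv: "nat (snd (quotient_of r)) dvd M"
  shows "\<exists>k \<le> M. r = of_nat k / of_nat M"
proof -
  obtain p d where qr: "quotient_of r = (p, d)" by (cases "quotient_of r") auto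
  have d: "d > 0" using quotient_of_denom_pos[OF qr] .
  have rpd: "r = of_int p / of_int d" using quotient_of_div[OF qr] .
  have p0: "p \<ge> 0" using r rpd d unfolding unit_rat_def by (simp add: zero_le_divide_iff)
  have pd: "p \<le> d" using r rpd d unfolding unit_rat_def by (simp add: divide_le_eq_1)
  obtain c where c: "M = nat d * c" using dv qr by auto
  have "r = of_nat (nat p * c) / of_nat M"
    using rpd c p0 d M by (simp add: field_simps)
  moreover have "nat p * c \<le> M" using c pd by (simp add: mult_le_mono1 nat_mono)
  ultimately show ?thesis by blast
qed

lemma frac2: assumes "r \<in> unit_rat" "s \<in> unit_rat"
  shows "\<exists>N k l. 1 \<le> N \<and> k \<le> N \<and> l \<le> N \<and> r = of_nat k / of_nat N \<and> s = of_nat l / of_nat N"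
proof -
  define N where "N = nat (snd (quotient_of r)) * nat (snd (quotient_of s))"
  have "nat (snd (quotient_of r)) \<ge> 1" "nat (snd (quotient_of s)) \<ge> 1"
    using quotient_of_denom_pos' by (simp_all add: Suc_le_eq)
  then have N: "N \<ge> 1" unfolding N_def by simp
  obtain k where "k \<le> N" "r = of_nat k / of_nat N" using frac1[OF assms(1) N] unfolding N_def by auto
  moreover obtain l where "l \<le> N" "s = of_nat l / of_nat N" using frac1[OF assms(2) N] unfolding N_def by auto
  ultimately show ?thesis using N by blast
qed

lemma star_L: "star a \<in> L_fm"
  by (induct a) (auto simp: L_fm_def const_star_def)

lemma L_eq_prov: "a \<in> L_fm \<Longrightarrow> b \<in> L_fm \<Longrightarrow> clL a = clL b \<Longrightarrow> L_prov T_Q (Equiv a b)"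
  by (rule L_prov_cl) (auto simp: L_fm_def clL_Equiv wL.eqv_refl)

lemma ar_prod: "1 \<le> N \<Longrightarrow> k \<le> N \<Longrightarrow> l \<le> N \<Longrightarrow> luk_prod (of_nat k / of_nat N) (of_nat l / of_nat N) = of_nat (k + l - N) / of_nat N"
  by (cases "k + l \<le> N") (auto simp: luk_prod_def divide_simps of_nat_diff max_def)
lemma ar_imp: "1 \<le> N \<Longrightarrow> k \<le> N \<Longrightarrow> l \<le> N \<Longrightarrow> luk_imp (of_nat k / of_nat N) (of_nat l / of_nat N) = of_nat (min N (N - k + l)) / of_nat N"
  by (cases "k \<le> l") (auto simp: luk_imp_def divide_simps of_nat_diff min_def)
lemma ar_min: "1 \<le> N \<Longrightarrow> min (of_nat k / of_nat N) (of_nat l / of_nat N) = (of_nat (min k l) / of_nat N :: rat)"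
  by (cases "k \<le> l") (auto simp: divide_simps min_def)
lemma ar_max: "1 \<le> N \<Longrightarrow> max (of_nat k / of_nat N) (of_nat l / of_nat N) = (of_nat (max k l) / of_nat N :: rat)"
  by (cases "k \<le> l") (auto simp: divide_simps max_def)
lemma ar_oplus: "1 \<le> N \<Longrightarrow> luk_oplus (of_nat k / of_nat N) (of_nat l / of_nat N) = of_nat (min N (k + l)) / of_nat N"
  by (cases "k + l \<le> N") (auto simp: luk_oplus_def divide_simps min_def)
lemma ar_equiv: "1 \<le> N \<Longrightarrow> k \<le> N \<Longrightarrow> l \<le> N \<Longrightarrow> luk_equiv (of_nat k / of_nat N) (of_nat l / of_nat N) = of_nat (min N (N - k + l) + min N (N - l + k) - N) / of_nat N"
  by (cases "k \<le> l") (auto simp: luk_equiv_def divide_simps of_nat_diff min_def abs_if)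
lemma ar_neg: "1 \<le> N \<Longrightarrow> k \<le> N \<Longrightarrow> 1 - (of_nat k / of_nat N) = (of_nat (N - k) / of_nat N :: rat)"
  by (auto simp: divide_simps of_nat_diff)
lemma bkp_prod: assumes r0: "r \<in> unit_rat" and s0: "s \<in> unit_rat"
  shows "L_prov T_Q (star (Equiv (Prod (Const r) (Const s)) (Const (luk_prod r s))))"
proof -
  obtain N k l where N: "1 \<le> N" "k \<le> N" "l \<le> N" and r: "r = of_nat k / of_nat N" and s: "s = of_nat l / of_nat N"
    using frac2[OF r0 s0] by blast
  have u: "wL.sol N (uL N)" using sol_uL N by simp
  have cr: "clL (const_star r) = wL.mult k (uL N)" by (rule clL_cs[OF N(1) N(2) r])
  have cs: "clL (const_star s) = wL.mult l (uL N)" by (rule clL_cs[OF N(1) N(3) s])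
  have eq: "luk_prod r s = of_nat (k + l - N) / of_nat N"
    unfolding r s by (rule ar_prod[OF N])
  have ct: "clL (const_star (luk_prod r s)) = wL.mult (k + l - N) (uL N)" by (rule clL_cs[OF N(1) _ eq]) (use N in auto)
  have "clL (Prod (const_star r) (const_star s)) = clL (const_star (luk_prod r s))"
    using N by (simp add: cr cs ct clL_simps wL.sol_odot[OF u])
  then have "L_prov T_Q (Equiv (Prod (const_star r) (const_star s)) (const_star (luk_prod r s)))"
    by (rule L_eq_prov[rotated 2]) (use star_L[of "Prod (Const r) (Const s)"] star_L[of "Const (luk_prod r s)"] in simp_all)
  then show ?thesis by simp
qed
lemma bkp_imp: assumes r0: "r \<in> unit_rat" and s0: "s \<in> unit_rat"
  shows "L_prov T_Q (star (Equiv (Imp (Const r) (Const s)) (Const (luk_imp r s))))"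
proof -
  obtain N k l where N: "1 \<le> N" "k \<le> N" "l \<le> N" and r: "r = of_nat k / of_nat N" and s: "s = of_nat l / of_nat N"
    using frac2[OF r0 s0] by blast
  have u: "wL.sol N (uL N)" using sol_uL N by simp
  have cr: "clL (const_star r) = wL.mult k (uL N)" by (rule clL_cs[OF N(1) N(2) r])
  have cs: "clL (const_star s) = wL.mult l (uL N)" by (rule clL_cs[OF N(1) N(3) s])
  have eq: "luk_imp r s = of_nat (min N (N - k + l)) / of_nat N"
    unfolding r s by (rule ar_imp[OF N])
  have ct: "clL (const_star (luk_imp r s)) = wL.mult (min N (N - k + l)) (uL N)" by (rule clL_cs[OF N(1) _ eq]) (use N in auto)
  have "clL (Imp (const_star r) (const_star s)) = clL (const_star (luk_imp r s))"
    using N by (simp add: cr cs ct clL_simps wL.sol_imp[OF u])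
  then have "L_prov T_Q (Equiv (Imp (const_star r) (const_star s)) (const_star (luk_imp r s)))"
    by (rule L_eq_prov[rotated 2]) (use star_L[of "Imp (Const r) (Const s)"] star_L[of "Const (luk_imp r s)"] in simp_all)
  then show ?thesis by simp
qed
lemma bkp_and: assumes r0: "r \<in> unit_rat" and s0: "s \<in> unit_rat"
  shows "L_prov T_Q (star (Equiv (And (Const r) (Const s)) (Const (min r s))))"
proof -
  obtain N k l where N: "1 \<le> N" "k \<le> N" "l \<le> N" and r: "r = of_nat k / of_nat N" and s: "s = of_nat l / of_nat N"
    using frac2[OF r0 s0] by blast
  have u: "wL.sol N (uL N)" using sol_uL N by simp
  have cr: "clL (const_star r) = wL.mult k (uL N)" by (rule clL_cs[OF N(1) N(2) r])
  have cs: "clL (const_star s) = wL.mult l (uL N)" by (rule clL_cs[OF N(1) N(3) s])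
  have eq: "min r s = of_nat (min k l) / of_nat N"
    unfolding r s by (rule ar_min[OF N(1)])
  have ct: "clL (const_star (min r s)) = wL.mult (min k l) (uL N)" by (rule clL_cs[OF N(1) _ eq]) (use N in auto)
  have "clL (And (const_star r) (const_star s)) = clL (const_star (min r s))"
    using N by (simp add: cr cs ct clL_simps wL.sol_meet)
  then have "L_prov T_Q (Equiv (And (const_star r) (const_star s)) (const_star (min r s)))"
    by (rule L_eq_prov[rotated 2]) (use star_L[of "And (Const r) (Const s)"] star_L[of "Const (min r s)"] in simp_all)
  then show ?thesis by simp
qed
lemma bkp_or: assumes r0: "r \<in> unit_rat" and s0: "s \<in> unit_rat"
  shows "L_prov T_Q (star (Equiv (Or (Const r) (Const s)) (Const (max r s))))"
proof -
  obtain N k l where N: "1 \<le> N" "k \<le> N" "l \<le> N" and r: "r = of_nat k / of_nat N" and s: "s = of_nat l / of_nat N"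
    using frac2[OF r0 s0] by blast
  have u: "wL.sol N (uL N)" using sol_uL N by simp
  have cr: "clL (const_star r) = wL.mult k (uL N)" by (rule clL_cs[OF N(1) N(2) r])
  have cs: "clL (const_star s) = wL.mult l (uL N)" by (rule clL_cs[OF N(1) N(3) s])
  have eq: "max r s = of_nat (max k l) / of_nat N"
    unfolding r s by (rule ar_max[OF N(1)])
  have ct: "clL (const_star (max r s)) = wL.mult (max k l) (uL N)" by (rule clL_cs[OF N(1) _ eq]) (use N in auto)
  have "clL (Or (const_star r) (const_star s)) = clL (const_star (max r s))"
    using N by (simp add: cr cs ct clL_simps wL.sol_join)
  then have "L_prov T_Q (Equiv (Or (const_star r) (const_star s)) (const_star (max r s)))"
    by (rule L_eq_prov[rotated 2]) (use star_L[of "Or (Const r) (Const s)"] star_L[of "Const (max r s)"] in simp_all)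
  then show ?thesis by simp
qed
lemma bkp_oplus: assumes r0: "r \<in> unit_rat" and s0: "s \<in> unit_rat"
  shows "L_prov T_Q (star (Equiv (Oplus (Const r) (Const s)) (Const (luk_oplus r s))))"
proof -
  obtain N k l where N: "1 \<le> N" "k \<le> N" "l \<le> N" and r: "r = of_nat k / of_nat N" and s: "s = of_nat l / of_nat N"
    using frac2[OF r0 s0] by blast
  have u: "wL.sol N (uL N)" using sol_uL N by simp
  have cr: "clL (const_star r) = wL.mult k (uL N)" by (rule clL_cs[OF N(1) N(2) r])
  have cs: "clL (const_star s) = wL.mult l (uL N)" by (rule clL_cs[OF N(1) N(3) s])
  have eq: "luk_oplus r s = of_nat (min N (k + l)) / of_nat N"
    unfolding r s by (rule ar_oplus[OF N(1)])
  have ct: "clL (const_star (luk_oplus r s)) = wL.mult (min N (k + l)) (uL N)" by (rule clL_cs[OF N(1) _ eq]) (use N in auto)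
  have "clL (Oplus (const_star r) (const_star s)) = clL (const_star (luk_oplus r s))"
    using N by (simp add: cr cs ct clL_simps wL.sol_oplus[OF u])
  then have "L_prov T_Q (Equiv (Oplus (const_star r) (const_star s)) (const_star (luk_oplus r s)))"
    by (rule L_eq_prov[rotated 2]) (use star_L[of "Oplus (Const r) (Const s)"] star_L[of "Const (luk_oplus r s)"] in simp_all)
  then show ?thesis by simp
qed
lemma bkp_equiv: assumes r0: "r \<in> unit_rat" and s0: "s \<in> unit_rat"
  shows "L_prov T_Q (star (Equiv (Equiv (Const r) (Const s)) (Const (luk_equiv r s))))"
proof -
  obtain N k l where N: "1 \<le> N" "k \<le> N" "l \<le> N" and r: "r = of_nat k / of_nat N" and s: "s = of_nat l / of_nat N"
    using frac2[OF r0 s0] by blast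
  have u: "wL.sol N (uL N)" using sol_uL N by simp
  have cr: "clL (const_star r) = wL.mult k (uL N)" by (rule clL_cs[OF N(1) N(2) r])
  have cs: "clL (const_star s) = wL.mult l (uL N)" by (rule clL_cs[OF N(1) N(3) s])
  have eq: "luk_equiv r s = of_nat (min N (N - k + l) + min N (N - l + k) - N) / of_nat N"
    unfolding r s by (rule ar_equiv[OF N])
  have ct: "clL (const_star (luk_equiv r s)) = wL.mult (min N (N - k + l) + min N (N - l + k) - N) (uL N)" by (rule clL_cs[OF N(1) _ eq]) (use N in auto)
  have "clL (Equiv (const_star r) (const_star s)) = clL (const_star (luk_equiv r s))"
    using N by (simp add: cr cs ct clL_simps wL.sol_imp[OF u] wL.sol_odot[OF u])
  then have "L_prov T_Q (Equiv (Equiv (const_star r) (const_star s)) (const_star (luk_equiv r s)))"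
    by (rule L_eq_prov[rotated 2]) (use star_L[of "Equiv (Const r) (Const s)"] star_L[of "Const (luk_equiv r s)"] in simp_all)
  then show ?thesis by simp
qed
lemma bkp_neg: assumes r0: "r \<in> unit_rat"
  shows "L_prov T_Q (star (Equiv (Neg (Const r)) (Const (1 - r))))"
proof -
  obtain N k l where N: "1 \<le> N" "k \<le> N" "l \<le> N" and r: "r = of_nat k / of_nat N"
    using frac2[OF r0 r0] by blast
  have u: "wL.sol N (uL N)" using sol_uL N by simp
  have cr: "clL (const_star r) = wL.mult k (uL N)" by (rule clL_cs[OF N(1) N(2) r])
  have eq: "1 - r = of_nat (N - k) / of_nat N" unfolding r by (rule ar_neg[OF N(1,2)])
  have ct: "clL (const_star (1 - r)) = wL.mult (N - k) (uL N)" by (rule clL_cs[OF N(1) _ eq]) (use N in auto)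
  have "clL (Neg (const_star r)) = clL (const_star (1 - r))"
    using N by (simp add: cr ct clL_simps wL.sol_neg[OF u])
  then have "L_prov T_Q (Equiv (Neg (const_star r)) (const_star (1 - r)))"
    by (rule L_eq_prov[rotated 2]) (use star_L[of "Neg (Const r)"] star_L[of "Const (1 - r)"] in simp_all)
  then show ?thesis by simp
qed

lemma bk_prov: "b \<in> bookkeeping \<Longrightarrow> L_prov T_Q (star b)"
  by (induct rule: bookkeeping.induct)
     (fact bkp_neg bkp_prod bkp_imp bkp_and bkp_or bkp_oplus bkp_equiv | (rule bkp_neg bkp_prod bkp_imp bkp_and bkp_or bkp_oplus bkp_equiv; assumption))+

fun nrmR :: "fm \<Rightarrow> fm" where
  "nrmR (Var x) = (case x of VX i \<Rightarrow> Var (VX i) | VQ m n \<Rightarrow> Const 0)"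
| "nrmR (Const r) = (if 0 \<le> r \<and> r \<le> 1 then Const r else Const 0)"
| "nrmR (Prod a b) = Prod (nrmR a) (nrmR b)"
| "nrmR (Imp a b) = Imp (nrmR a) (nrmR b)"
| "nrmR (And a b) = And (nrmR a) (nrmR b)"
| "nrmR (Or a b) = Or (nrmR a) (nrmR b)"
| "nrmR (Neg a) = Neg (nrmR a)"
| "nrmR (Oplus a b) = Oplus (nrmR a) (nrmR b)"
| "nrmR (Equiv a b) = Equiv (nrmR a) (nrmR b)"

lemma nrmR_S: "nrmR a \<in> RPL_fm"
proof (induct a)
  case (Var x) then show ?case by (cases x) (auto simp: RPL_fm_def)
qed (auto simp: RPL_fm_def)
lemma nrmR_id: "a \<in> RPL_fm \<Longrightarrow> nrmR a = a"
proof (induct a)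
  case (Var x) then show ?case by (cases x) (auto simp: RPL_fm_def)
qed (auto simp: RPL_fm_def)

interpretation hR: hiln RPL_fm bookkeeping "{}" nrmR
  by unfold_locales (use nrmR_S in \<open>auto simp: RPL_fm_def\<close>)

quotient_type lindR = fm / "lrel RPL_fm bookkeeping {} nrmR"
  by (rule hR.R_equivp)

lift_definition limpR :: "lindR \<Rightarrow> lindR \<Rightarrow> lindR" is Imp by (rule hR.R_Imp)
lift_definition lnegR :: "lindR \<Rightarrow> lindR" is Neg by (rule hR.R_Neg)
lift_definition loneR :: "lindR" is "Const 1" .

interpretation wR: wajs limpR lnegR loneR
proof
  fix x y z
  show "limpR loneR x = x" by transfer (rule hR.R_W1)
  show "limpR (limpR x y) (limpR (limpR y z) (limpR x z)) = loneR" by transfer (rule hR.R_W2)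
  show "limpR (limpR x y) y = limpR (limpR y x) x" by transfer (rule hR.R_W3)
  show "limpR (limpR (lnegR x) (lnegR y)) (limpR y x) = loneR" by transfer (rule hR.R_W4)
qed

abbreviation clR where "clR \<equiv> abs_lindR"

lemma clR_eq: "clR a = clR b \<longleftrightarrow> lrel RPL_fm bookkeeping {} nrmR a b"
  by (simp add: lindR.abs_eq_iff)
lemma clR_Imp: "clR (Imp a b) = limpR (clR a) (clR b)" by (simp add: limpR.abs_eq)
lemma clR_Neg: "clR (Neg a) = lnegR (clR a)" by (simp add: lnegR.abs_eq)
lemma clR_C1: "clR (Const 1) = loneR" by (simp add: loneR.abs_eq)
lemma clR_Equiv: "clR (Equiv a b) = wR.odot (limpR (clR a) (clR b)) (limpR (clR b) (clR a))"
  using hR.R_Equiv clR_eq clR_Imp clR_Neg by metis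

lemma clR_one: "clR a = loneR \<longleftrightarrow> derivable (L_axioms RPL_fm \<union> bookkeeping) {} (nrmR a)"
  using hR.R_one[of a] clR_eq[of a "Const 1"] clR_C1 by simp

lemma unit_luk: "r \<in> unit_rat \<Longrightarrow> s \<in> unit_rat \<Longrightarrow>
  1 - r \<in> unit_rat \<and> luk_prod r s \<in> unit_rat \<and> luk_imp r s \<in> unit_rat \<and> min r s \<in> unit_rat
  \<and> max r s \<in> unit_rat \<and> luk_oplus r s \<in> unit_rat \<and> luk_equiv r s \<in> unit_rat"
  unfolding unit_rat_def luk_prod_def luk_imp_def luk_oplus_def luk_equiv_def by (simp add: abs_if)
lemma bk_RPL: "b \<in> bookkeeping \<Longrightarrow> b \<in> RPL_fm"
  by (induct rule: bookkeeping.induct) (use unit_luk in \<open>auto simp: RPL_fm_def unit_rat_def\<close>)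

lemma bk_eq: "Equiv a b \<in> bookkeeping \<Longrightarrow> clR a = clR b"
proof -
  assume h: "Equiv a b \<in> bookkeeping"
  have "clR (Equiv a b) = loneR" unfolding clR_one using nrmR_id[OF bk_RPL[OF h]] h
    by (simp add: derivable.axiom)
  then show ?thesis using clR_Equiv wR.eqv_one by metis
qed

fun val :: "fm \<Rightarrow> rat" where
  "val (Var x) = 0"
| "val (Const r) = r"
| "val (Prod a b) = luk_prod (val a) (val b)"
| "val (Imp a b) = luk_imp (val a) (val b)"
| "val (And a b) = min (val a) (val b)"
| "val (Or a b) = max (val a) (val b)"
| "val (Neg a) = 1 - val a"
| "val (Oplus a b) = luk_oplus (val a) (val b)"
| "val (Equiv a b) = luk_equiv (val a) (val b)"

lemma clR_Prod: "clR (Prod a b) = wR.odot (clR a) (clR b)"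
  using hR.R_Prod clR_eq clR_Imp clR_Neg by metis
lemma clR_Oplus: "clR (Oplus a b) = wR.oplus (clR a) (clR b)"
  using hR.R_Oplus clR_eq clR_Imp clR_Neg by metis
lemma clR_Or: "clR (Or a b) = wR.join (clR a) (clR b)"
  using hR.R_Or clR_eq clR_Imp by metis
lemma clR_And: "clR (And a b) = wR.meet (clR a) (clR b)"
  using hR.R_And clR_eq clR_Imp clR_Neg by metis

lemma closed_val: "vars c = {} \<Longrightarrow> fconsts c \<subseteq> unit_rat \<Longrightarrow> val c \<in> unit_rat \<and> clR c = clR (Const (val c))"
proof (induct c)
  case (Var x) then show ?case by simp
next
  case (Const r) then show ?case by simp
next
  case (Neg a)
  then have ha: "val a \<in> unit_rat" "clR a = clR (Const (val a))" by auto
  have "clR (Neg a) = clR (Neg (Const (val a)))" by (simp add: clR_Neg ha(2))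
  also have "\<dots> = clR (Const (1 - val a))" by (rule bk_eq[OF bookkeeping.bk_neg[OF ha(1)]])
  finally show ?case using unit_luk[OF ha(1) ha(1)] by simp
next
  case (Prod a b)
  then have ha: "val a \<in> unit_rat" "clR a = clR (Const (val a))"
    and hb: "val b \<in> unit_rat" "clR b = clR (Const (val b))" by auto
  have "clR (Prod a b) = clR (Prod (Const (val a)) (Const (val b)))" by (simp add: clR_Prod ha(2) hb(2))
  also have "\<dots> = clR (Const (luk_prod (val a) (val b)))" by (rule bk_eq[OF bookkeeping.bk_prod[OF ha(1) hb(1)]])
  finally show ?case using unit_luk[OF ha(1) hb(1)] by simp
next
  case (Imp a b)
  then have ha: "val a \<in> unit_rat" "clR a = clR (Const (val a))"
    and hb: "val b \<in> unit_rat" "clR b = clR (Const (val b))" by auto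
  have "clR (Imp a b) = clR (Imp (Const (val a)) (Const (val b)))" by (simp add: clR_Imp ha(2) hb(2))
  also have "\<dots> = clR (Const (luk_imp (val a) (val b)))" by (rule bk_eq[OF bookkeeping.bk_imp[OF ha(1) hb(1)]])
  finally show ?case using unit_luk[OF ha(1) hb(1)] by simp
next
  case (And a b)
  then have ha: "val a \<in> unit_rat" "clR a = clR (Const (val a))"
    and hb: "val b \<in> unit_rat" "clR b = clR (Const (val b))" by auto
  have "clR (And a b) = clR (And (Const (val a)) (Const (val b)))" by (simp add: clR_And ha(2) hb(2))
  also have "\<dots> = clR (Const (min (val a) (val b)))" by (rule bk_eq[OF bookkeeping.bk_and[OF ha(1) hb(1)]])
  finally show ?case using unit_luk[OF ha(1) hb(1)] by simp
next
  case (Or a b)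
  then have ha: "val a \<in> unit_rat" "clR a = clR (Const (val a))"
    and hb: "val b \<in> unit_rat" "clR b = clR (Const (val b))" by auto
  have "clR (Or a b) = clR (Or (Const (val a)) (Const (val b)))" by (simp add: clR_Or ha(2) hb(2))
  also have "\<dots> = clR (Const (max (val a) (val b)))" by (rule bk_eq[OF bookkeeping.bk_or[OF ha(1) hb(1)]])
  finally show ?case using unit_luk[OF ha(1) hb(1)] by simp
next
  case (Oplus a b)
  then have ha: "val a \<in> unit_rat" "clR a = clR (Const (val a))"
    and hb: "val b \<in> unit_rat" "clR b = clR (Const (val b))" by auto
  have "clR (Oplus a b) = clR (Oplus (Const (val a)) (Const (val b)))" by (simp add: clR_Oplus ha(2) hb(2))
  also have "\<dots> = clR (Const (luk_oplus (val a) (val b)))" by (rule bk_eq[OF bookkeeping.bk_oplus[OF ha(1) hb(1)]])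
  finally show ?case using unit_luk[OF ha(1) hb(1)] by simp
next
  case (Equiv a b)
  then have ha: "val a \<in> unit_rat" "clR a = clR (Const (val a))"
    and hb: "val b \<in> unit_rat" "clR b = clR (Const (val b))" by auto
  have "clR (Equiv a b) = clR (Equiv (Const (val a)) (Const (val b)))" by (simp add: clR_Equiv ha(2) hb(2))
  also have "\<dots> = clR (Const (luk_equiv (val a) (val b)))" by (rule bk_eq[OF bookkeeping.bk_equiv[OF ha(1) hb(1)]])
  finally show ?case using unit_luk[OF ha(1) hb(1)] by simp
qed

lemma closed_prov: assumes "vars a = {}" "fconsts a \<subseteq> unit_rat" "vars b = {}" "fconsts b \<subseteq> unit_rat"
  "val a = val b" shows "RPL_prov {} (Equiv a b)"
proof -
  have "clR a = clR b" using closed_val assms by metis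
  then have "clR (Equiv a b) = loneR" using clR_Equiv wR.eqv_refl by simp
  moreover have "Equiv a b \<in> RPL_fm" using assms unfolding RPL_fm_def unit_rat_def by auto
  ultimately show ?thesis unfolding RPL_prov_def clR_one using nrmR_id by metis
qed

fun sub :: "fm \<Rightarrow> fm" where
  "sub (Var x) = (case x of VX i \<Rightarrow> Var (VX i)
     | VQ m n \<Rightarrow> Const (if 0 < n \<and> m \<le> n then of_nat m / of_nat n else 0))"
| "sub (Const r) = Const r"
| "sub (Prod a b) = Prod (sub a) (sub b)"
| "sub (Imp a b) = Imp (sub a) (sub b)"
| "sub (And a b) = And (sub a) (sub b)"
| "sub (Or a b) = Or (sub a) (sub b)"
| "sub (Neg a) = Neg (sub a)"
| "sub (Oplus a b) = Oplus (sub a) (sub b)"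
| "sub (Equiv a b) = Equiv (sub a) (sub b)"

lemma sub_RPL: "a \<in> L_fm \<Longrightarrow> sub a \<in> RPL_fm"
proof (induct a)
  case (Var x) then show ?case by (cases x) (auto simp: RPL_fm_def)
qed (auto simp: RPL_fm_def L_fm_def)

lemma sub_ax: "a \<in> L_axioms L_fm \<Longrightarrow> sub a \<in> L_axioms RPL_fm"
  by (induct rule: L_axioms.induct) (auto intro: L_axioms.intros sub_RPL)

lemma sub_star: "a \<in> RPL_fm \<Longrightarrow> sub (star a) = a"
proof (induct a)
  case (Var x) then show ?case by (cases x) (auto simp: RPL_fm_def)
next
  case (Const r)
  then have r: "0 \<le> r" "r \<le> 1" by (auto simp: RPL_fm_def)
  show ?case
  proof (cases "r = 0 \<or> r = 1")
    case True then show ?thesis by (auto simp: const_star_def)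
  next
    case False
    obtain p d where qr: "quotient_of r = (p, d)" by (cases "quotient_of r") auto
    have d: "d > 0" using quotient_of_denom_pos[OF qr] .
    have rpd: "r = of_int p / of_int d" using quotient_of_div[OF qr] .
    have p0: "p \<ge> 0" using r rpd d by (simp add: zero_le_divide_iff)
    have pd: "p \<le> d" using r rpd d by (simp add: divide_le_eq_1)
    have "sub (star (Const r)) = Const (of_nat (nat p) / of_nat (nat d))"
      using False qr d pd by (simp add: const_star_def nat_mono)
    also have "of_nat (nat p) / of_nat (nat d) = r" using rpd p0 d by simp
    finally show ?thesis .
  qed
qed (auto simp: RPL_fm_def)

lemma sub_fpow: "sub (fpow a k) = fpow (sub a) k"
  by (induct a k rule: fpow.induct) auto
lemma sub_fmult: "sub (fmult k a) = fmult k (sub a)"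
  by (induct k a rule: fmult.induct) auto
lemma vars_fpow: "vars (fpow a k) \<subseteq> vars a"
  by (induct a k rule: fpow.induct) auto
lemma vars_fmult: "vars (fmult k a) \<subseteq> vars a"
  by (induct k a rule: fmult.induct) auto

lemma val_fpow: "0 \<le> val x \<Longrightarrow> val x \<le> 1 \<Longrightarrow> val (fpow x k) = max 0 (1 - of_nat k * (1 - val x))"
proof (induct x k rule: fpow.induct)
  case (1 a) then show ?case by simp
next
  case (2 a) then show ?case by simp
next
  case (3 a k)
  then show ?case by (auto simp: luk_prod_def max_def algebra_simps)
qed
lemma val_fmult: "0 \<le> val x \<Longrightarrow> val x \<le> 1 \<Longrightarrow> val (fmult k x) = min 1 (of_nat k * val x)"
proof (induct k x rule: fmult.induct)
  case (1 a) then show ?case by simp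
next
  case (2 a) then show ?case by simp
next
  case (3 k a)
  then show ?case by (auto simp: luk_oplus_def min_def algebra_simps)
qed

lemma TQ_sub: "a \<in> T_Q \<Longrightarrow> RPL_prov {} (sub a)"
proof (induct rule: T_Q.induct)
  case (tq0 n)
  then show ?case using closed_prov[of "Const 0" "Const 0"] by (simp add: unit_rat_def)
next
  case tq1
  then show ?case using closed_prov[of "Const 1" "Const 1"] by (simp add: unit_rat_def)
next
  case (tq2 n)
  define c where "c = Const (1 / of_nat n)"
  have sq: "sub (q 1 n) = c" using tq2 unfolding c_def by simp
  have cu: "fconsts c \<subseteq> unit_rat" "vars c = {}" using tq2 unfolding c_def by (auto simp: unit_rat_def)
  have "fconsts (fpow (Neg c) (n - 1)) \<subseteq> unit_rat"
    using fconsts_fpow[of "Neg c" "n - 1"] cu by (auto simp: unit_rat_def)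
  moreover have "vars (fpow (Neg c) (n - 1)) = {}" using vars_fpow[of "Neg c" "n - 1"] cu by auto
  moreover have "val (fpow (Neg c) (n - 1)) = val c"
  proof -
    have "val (fpow (Neg c) (n - 1)) = max 0 (1 - of_nat (n - 1) * (1 - (1 - 1 / of_nat n)))"
      using val_fpow[of "Neg c" "n - 1"] tq2 unfolding c_def by simp
    also have "\<dots> = 1 / of_nat n" using tq2 by (simp add: of_nat_diff field_simps)
    finally show ?thesis unfolding c_def by simp
  qed
  ultimately have "RPL_prov {} (Equiv c (fpow (Neg c) (n - 1)))" using closed_prov cu by simp
  then show ?case using sq by (simp add: sub_fpow)
next
  case (tq3 m n)
  define c where "c = Const (1 / of_nat n)"
  have sq: "sub (q 1 n) = c" using tq3 unfolding c_def by simp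
  have cu: "fconsts c \<subseteq> unit_rat" "vars c = {}" using tq3 unfolding c_def by (auto simp: unit_rat_def)
  have sm: "sub (q m n) = Const (of_nat m / of_nat n)" using tq3 by simp
  have "fconsts (fmult m c) \<subseteq> unit_rat"
    using fconsts_fmult[of m c] cu by (auto simp: unit_rat_def)
  moreover have "vars (fmult m c) = {}" using vars_fmult[of m c] cu by auto
  moreover have "val (fmult m c) = of_nat m / of_nat n"
    using val_fmult[of c m] tq3 unfolding c_def by (simp add: min_def divide_le_eq_1)
  moreover have "fconsts (Const (of_nat m / of_nat n)) \<subseteq> unit_rat"
    using tq3 by (simp add: unit_rat_def divide_le_eq_1)
  ultimately have "RPL_prov {} (Equiv (Const (of_nat m / of_nat n)) (fmult m c))"
    using closed_prov by simp
  then show ?case using sq sm by (simp add: sub_fmult)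
qed

lemma bwd: assumes T: "T \<subseteq> RPL_fm" and d: "derivable (L_axioms L_fm) (star ` T \<union> T_Q) \<psi>"
  shows "RPL_prov T (sub \<psi>)"
  using d
proof (induct rule: derivable.induct)
  case (axiom \<phi>) then show ?case unfolding RPL_prov_def by (intro derivable.axiom UnI1 sub_ax)
next
  case (hyp \<phi>)
  then show ?case
  proof
    assume "\<phi> \<in> star ` T"
    then obtain a where "a \<in> T" "\<phi> = star a" by blast
    then show ?thesis using T sub_star unfolding RPL_prov_def by (metis derivable.hyp subsetD)
  next
    assume "\<phi> \<in> T_Q"
    then have "derivable (L_axioms RPL_fm \<union> bookkeeping) {} (sub \<phi>)" using TQ_sub unfolding RPL_prov_def by blast
    then show ?thesis unfolding RPL_prov_def by (rule derivable_mono) auto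
  qed
next
  case (mp \<phi> \<psi>)
  then have "derivable (L_axioms RPL_fm \<union> bookkeeping) T (sub \<phi>)"
    "derivable (L_axioms RPL_fm \<union> bookkeeping) T (Imp (sub \<phi>) (sub \<psi>))"
    unfolding RPL_prov_def by simp_all
  then show ?case unfolding RPL_prov_def by (rule derivable.mp)
qed
lemma star_ax: "a \<in> L_axioms S \<Longrightarrow> star a \<in> L_axioms L_fm"
  by (induct rule: L_axioms.induct) (auto intro: L_axioms.intros star_L simp: const_star_def)

lemma fwd: assumes d: "derivable (L_axioms RPL_fm \<union> bookkeeping) T \<phi>"
  shows "L_prov (star ` T \<union> T_Q) (star \<phi>)"
  using d
proof (induct rule: derivable.induct)
  case (axiom \<phi>)
  then show ?case
  proof
    assume "\<phi> \<in> L_axioms RPL_fm" then show ?thesis unfolding L_prov_def by (intro derivable.axiom star_ax)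
  next
    assume "\<phi> \<in> bookkeeping"
    then have "derivable (L_axioms L_fm) T_Q (star \<phi>)" using bk_prov unfolding L_prov_def by blast
    then show ?thesis unfolding L_prov_def by (rule derivable_mono) auto
  qed
next
  case (hyp \<phi>) then show ?case unfolding L_prov_def by (simp add: derivable.hyp)
next
  case (mp \<phi> \<psi>)
  then have "derivable (L_axioms L_fm) (star ` T \<union> T_Q) (star \<phi>)"
    "derivable (L_axioms L_fm) (star ` T \<union> T_Q) (Imp (star \<phi>) (star \<psi>))"
    unfolding L_prov_def by simp_all
  then show ?case unfolding L_prov_def by (rule derivable.mp)
qed

lemma main_equiv: assumes "T \<subseteq> RPL_fm" and "\<phi> \<in> RPL_fm"
  shows "RPL_prov T \<phi> \<longleftrightarrow> L_prov (star ` T \<union> T_Q) (star \<phi>)"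
proof
  assume "RPL_prov T \<phi>" then show "L_prov (star ` T \<union> T_Q) (star \<phi>)"
    unfolding RPL_prov_def by (rule fwd)
next
  assume "L_prov (star ` T \<union> T_Q) (star \<phi>)"
  then have "RPL_prov T (sub (star \<phi>))" using bwd assms(1) unfolding L_prov_def by blast
  then show "RPL_prov T \<phi>" using sub_star assms(2) by simp
qed

theorem corollary3p5:
  assumes "T \<subseteq> RPL_fm" and "\<phi> \<in> RPL_fm"
  shows "(RPL_prov T \<phi> \<longleftrightarrow> L_prov (star ` T \<union> T_Q) (star \<phi>))
       \<and> (RPL_prov {} \<phi> \<longleftrightarrow> L_prov T_Q (star \<phi>))"
  using main_equiv[OF assms] main_equiv[of "{}" \<phi>] assms(2) by simp

end
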